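(* Let $r,k,m$ be positive integers and $\alpha$ real with $\alpha>k>r$, such that $\alpha-m$ is not a negative integer and $\alpha\ne m+r-j$, $\alpha\neq m+k-j$ for $j=1,\dots,m$. Then $$\sum_{n=1}^\infty\frac{H_{n+\alpha-m}^{(2)}}{(n+r)(n+k)}=\frac1{k-r}\Bigg\{(r-\alpha)\sum_{j=1}^r\frac{H_{\alpha+j-r}^{(2)}}{j(\alpha+j-r)}-(k-\alpha)\sum_{j=1}^k\frac{H_{\alpha+j-k}^{(2)}}{j(\alpha+j-k)}-\sum_{j=1}^{k-r}\frac{H_{\alpha+j-k}}{(\alpha+j-k)^2}$$ $$+2H_{\alpha-r}^{(3)}+H_{\alpha-k}\zeta(2)+2H_{\alpha-r}H_{\alpha-r}^{(2)}-2H_{\alpha-k}^{(3)}-H_{\alpha-r}\zeta(2)-2H_{\alpha-k}H_{\alpha-k}^{(2)}\Bigg\}$$ $$-\frac1{k-r}\Bigg\{\sum_{j=1}^m\frac{H_{\alpha+j-m}-H_r}{(\alpha+j-m-r)^2}-\sum_{j=1}^m\frac{\zeta(2)-H_{\alpha+j-m}^{(2)}}{\alpha+j-m-r}-\sum_{j=1}^m\frac{H_{\alpha+j-m}-H_k}{(\alpha+j-m-k)^2}+\sum_{j=1}^m\frac{\zeta(2)-H_{\alpha+j-m}^{(2)}}{\alpha+j-m-k}\Bigg\}.$$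
   Context: Shifted harmonic numbers: for a real $\alpha$ that is not a negative integer, $H_\alpha := \sum_{k=1}^\infty\left(\frac1k-\frac1{k+\alpha}\right)$ and, for integers $m\ge 2$, $H_\alpha^{(m)} := \sum_{k=1}^\infty\left(\frac1{k^m}-\frac1{(k+\alpha)^m}\right)=\zeta(m)-\zeta(m,\alpha+1)$, where $\zeta$ is the Riemann zeta function and $\zeta(s,\alpha+1)=\sum_{n=1}^\infty (n+\alpha)^{-s}$ is the Hurwitz zeta function. For nonnegative integers these are the ordinary harmonic numbers. Empty sums are $0$. *)

theory Defs
  imports "HOL-Analysis.Analysis"
begin

definition shifted_harm :: "real \<Rightarrow> real" where
  "shifted_harm a = (\<Sum>k. 1 / real (Suc k) - 1 / (real (Suc k) + a))"

definition shifted_harm_pow :: "nat \<Rightarrow> real \<Rightarrow> real" where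
  "shifted_harm_pow m a = (\<Sum>k. 1 / real (Suc k) ^ m - 1 / (real (Suc k) + a) ^ m)"

definition rzeta :: "nat \<Rightarrow> real" where
  "rzeta m = (\<Sum>k. 1 / real (Suc k) ^ m)"

end

theory Submission
  imports Defs "HOL-Real_Asymp.Real_Asymp"
begin

definition good :: "real \<Rightarrow> bool" where
  "good x \<longleftrightarrow> (\<forall>i::nat. x + real (Suc i) \<noteq> 0)"

lemma good_pos: "x > -1 \<Longrightarrow> good x"
  unfolding good_def by auto

lemma good_plus1: "good x \<Longrightarrow> good (x + 1)"
  unfolding good_def by (metis add.assoc add.commute of_nat_Suc)

lemma summable_inv_sq: "summable (\<lambda>k. 4 / real (Suc k) ^ 2)"
proof -
  have "summable (\<lambda>n. 1 / (real n + 1)^2)"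
    using inverse_squares_sums by (simp add: sums_iff add.commute)
  then have "summable (\<lambda>n. (4::real) * (1 / (real n + 1)^2))" by (rule summable_mult)
  then show ?thesis by (simp add: add.commute)
qed

lemma eventually_big:
  fixes x :: real
  shows "eventually (\<lambda>k. real (Suc k) + x \<ge> real (Suc k) / 2 \<and> real (Suc k) + x \<ge> 1) sequentially"
proof -
  have "eventually (\<lambda>k. k \<ge> nat \<lceil>2 * \<bar>x\<bar>\<rceil> + 2) sequentially" by (rule eventually_ge_at_top)
  then show ?thesis
  proof (rule eventually_mono)
    fix k assume "k \<ge> nat \<lceil>2 * \<bar>x\<bar>\<rceil> + 2"
    then have "real k \<ge> 2 * \<bar>x\<bar> + 2" by linarith
    then show "real (Suc k) + x \<ge> real (Suc k) / 2 \<and> real (Suc k) + x \<ge> 1" by auto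
  qed
qed

lemma summable_pow_shift:
  fixes x :: real
  assumes "m \<ge> 2"
  shows "summable (\<lambda>k. 1 / (real (Suc k) + x) ^ m)"
proof (rule summable_comparison_test_ev[OF _ summable_inv_sq])
  show "eventually (\<lambda>k. norm (1 / (real (Suc k) + x) ^ m) \<le> 4 / real (Suc k) ^ 2) sequentially"
    using eventually_big[of x]
  proof (rule eventually_mono)
    fix k assume h: "real (Suc k) + x \<ge> real (Suc k) / 2 \<and> real (Suc k) + x \<ge> 1"
    define z where "z = real (Suc k) + x"
    have z1: "z \<ge> 1" and z2: "z \<ge> real (Suc k) / 2" using h by (auto simp: z_def)
    have "z ^ 2 \<le> z ^ m" using z1 assms by (intro power_increasing) auto
    moreover have "(real (Suc k) / 2) ^ 2 \<le> z ^ 2" using z2 by (intro power_mono) auto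
    ultimately have "real (Suc k) ^ 2 / 4 \<le> z ^ m" by (simp add: power_divide)
    moreover have "z ^ m > 0" using z1 by simp
    ultimately have "1 / z ^ m \<le> 4 / real (Suc k) ^ 2"
      by (simp add: field_simps del: of_nat_Suc)
    then show "norm (1 / (real (Suc k) + x) ^ m) \<le> 4 / real (Suc k) ^ 2"
      using \<open>z ^ m > 0\<close> unfolding z_def[symmetric] by simp
  qed
qed

lemma summable_harm_shift:
  fixes x :: real
  shows "summable (\<lambda>k. 1 / real (Suc k) - 1 / (real (Suc k) + x))"
proof (rule summable_comparison_test_ev[OF _ summable_mult[OF summable_inv_sq, of "\<bar>x\<bar>"]])
  show "eventually (\<lambda>k. norm (1 / real (Suc k) - 1 / (real (Suc k) + x)) \<le> \<bar>x\<bar> * (4 / real (Suc k) ^ 2)) sequentially"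
    using eventually_big[of x]
  proof (rule eventually_mono)
    fix k assume h: "real (Suc k) + x \<ge> real (Suc k) / 2 \<and> real (Suc k) + x \<ge> 1"
    define z where "z = real (Suc k) + x"
    define n where "n = real (Suc k)"
    have n0: "n > 0" by (simp add: n_def)
    have z1: "z \<ge> 1" and z2: "z \<ge> n / 2" using h by (auto simp: z_def n_def)
    have "1 / n - 1 / z = x / (n * z)" using n0 z1 by (simp add: field_simps z_def n_def)
    then have "norm (1 / n - 1 / z) = \<bar>x\<bar> / (n * z)" using n0 z1 by simp
    also have "\<dots> \<le> \<bar>x\<bar> / (n * (n/2))"
      using n0 z1 z2 by (intro divide_left_mono mult_left_mono mult_pos_pos) auto
    also have "\<dots> \<le> \<bar>x\<bar> * (4 / n ^ 2)" using n0 by (simp add: power2_eq_square field_simps)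
    finally show "norm (1 / real (Suc k) - 1 / (real (Suc k) + x)) \<le> \<bar>x\<bar> * (4 / real (Suc k) ^ 2)"
      by (simp add: z_def n_def)
  qed
qed

lemma H_sums: "(\<lambda>k. 1 / real (Suc k) - 1 / (real (Suc k) + x)) sums shifted_harm x"
  unfolding shifted_harm_def using summable_harm_shift summable_sums by blast

lemma zeta_sums: "m \<ge> 2 \<Longrightarrow> (\<lambda>k. 1 / real (Suc k) ^ m) sums rzeta m"
  unfolding rzeta_def using summable_pow_shift[of m 0] summable_sums by simp

lemma Hp_sums: "m \<ge> 2 \<Longrightarrow> (\<lambda>k. 1 / real (Suc k) ^ m - 1 / (real (Suc k) + x) ^ m) sums shifted_harm_pow m x"
  unfolding shifted_harm_pow_def using summable_pow_shift[of m 0] summable_pow_shift[of m x]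
  by (intro summable_sums summable_diff) auto

lemma tail_sums: "m \<ge> 2 \<Longrightarrow> (\<lambda>k. 1 / (real (Suc k) + x) ^ m) sums (rzeta m - shifted_harm_pow m x)"
  using sums_diff[OF zeta_sums[of m] Hp_sums[of m x]] by simp

lemma H_rec: "shifted_harm (x + 1) = shifted_harm x + 1 / (x + 1)"
proof -
  define f where "f k = 1 / (real (Suc k) + x)" for k
  have "f \<longlonglongrightarrow> 0" unfolding f_def by real_asymp
  then have "(\<lambda>k. f k - f (Suc k)) sums (f 0 - 0)" by (rule telescope_sums')
  moreover have "(\<lambda>k. f k - f (Suc k)) = (\<lambda>k. (1 / real (Suc k) - 1 / (real (Suc k) + (x+1))) - (1 / real (Suc k) - 1 / (real (Suc k) + x)))"
    by (auto simp: f_def algebra_simps)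
  ultimately have "(\<lambda>k. (1 / real (Suc k) - 1 / (real (Suc k) + (x+1))) - (1 / real (Suc k) - 1 / (real (Suc k) + x))) sums (1 / (x+1))"
    by (simp add: f_def add.commute)
  moreover have "(\<lambda>k. (1 / real (Suc k) - 1 / (real (Suc k) + (x+1))) - (1 / real (Suc k) - 1 / (real (Suc k) + x))) sums (shifted_harm (x+1) - shifted_harm x)"
    by (intro sums_diff H_sums)
  ultimately show ?thesis using sums_unique2 by fastforce
qed

lemma Hp_rec: "m \<ge> 2 \<Longrightarrow> shifted_harm_pow m (x + 1) = shifted_harm_pow m x + 1 / (x + 1) ^ m"
proof -
  assume m: "m \<ge> 2"
  define f where "f k = 1 / (real (Suc k) + x) ^ m" for k
  have "(\<lambda>k. 1 / (real (Suc k) + x)) \<longlonglongrightarrow> 0" by real_asymp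
  then have "(\<lambda>k. (1 / (real (Suc k) + x)) ^ m) \<longlonglongrightarrow> 0 ^ m" by (intro tendsto_power)
  moreover have "f = (\<lambda>k. (1 / (real (Suc k) + x)) ^ m)" unfolding f_def by (rule ext) (simp add: power_one_over)
  moreover have z: "(0::real)^m = 0" using m by simp
  ultimately have "f \<longlonglongrightarrow> 0" by (simp only: z)
  then have "(\<lambda>k. f k - f (Suc k)) sums (f 0 - 0)" by (rule telescope_sums')
  moreover have "(\<lambda>k. f k - f (Suc k)) = (\<lambda>k. (1 / real (Suc k) ^ m - 1 / (real (Suc k) + (x+1)) ^ m) - (1 / real (Suc k) ^ m - 1 / (real (Suc k) + x) ^ m))"
    by (auto simp: f_def algebra_simps)
  ultimately have "(\<lambda>k. (1 / real (Suc k) ^ m - 1 / (real (Suc k) + (x+1)) ^ m) - (1 / real (Suc k) ^ m - 1 / (real (Suc k) + x) ^ m)) sums (1 / (x+1) ^ m)"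
    by (simp add: f_def add.commute)
  moreover have "(\<lambda>k. (1 / real (Suc k) ^ m - 1 / (real (Suc k) + (x+1)) ^ m) - (1 / real (Suc k) ^ m - 1 / (real (Suc k) + x) ^ m)) sums (shifted_harm_pow m (x+1) - shifted_harm_pow m x)"
    using m by (intro sums_diff Hp_sums)
  ultimately show ?thesis using sums_unique2 by fastforce
qed

lemma H_zero: "shifted_harm 0 = 0"
  unfolding shifted_harm_def by simp

lemma H_nat: "shifted_harm (real c) = (\<Sum>u=1..c. 1 / real u)"
proof (induction c)
  case 0 then show ?case by (simp add: H_zero)
next
  case (Suc c)
  have "shifted_harm (real (Suc c)) = shifted_harm (real c + 1)" by (simp add: add.commute)
  also have "\<dots> = shifted_harm (real c) + 1 / (real c + 1)" by (rule H_rec)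
  finally show ?case using Suc by (simp add: add.commute)
qed

lemma Hp_iter: "m \<ge> 2 \<Longrightarrow> shifted_harm_pow m (x + real n) = shifted_harm_pow m x + (\<Sum>j=1..n. 1 / (x + real j) ^ m)"
proof (induction n)
  case 0 then show ?case by simp
next
  case (Suc n)
  have "shifted_harm_pow m (x + real (Suc n)) = shifted_harm_pow m ((x + real n) + 1)" by (simp add: ac_simps)
  also have "\<dots> = shifted_harm_pow m (x + real n) + 1 / (x + real n + 1) ^ m" using Suc by (intro Hp_rec) auto
  finally show ?case using Suc by (simp add: ac_simps)
qed

lemma aux2: "(A::real) \<noteq> 0 \<Longrightarrow> B \<noteq> 0 \<Longrightarrow> 1/A^2 - 1/(A*B) = (B-A)/(A^2*B)"
  by (simp add: field_simps power2_eq_square)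

lemma aux3: "(D::real) \<noteq> 0 \<Longrightarrow> (1/D)*X - (1/D^2)*(D/P) = (1/D)*(X - 1/P)"
  by (simp add: field_simps power2_eq_square)

lemma pf_alg:
  fixes s g c :: real
  assumes "s + g \<noteq> 0" "s + c \<noteq> 0" "s \<noteq> 0" "c - g \<noteq> 0"
  shows "1 / ((s + g)^2 * (s + c)) = (1 / (c-g)) * (1 / (s + g) ^ 2) - (1 / (c-g)^2) * ((1 / s - 1 / (s + c)) - (1 / s - 1 / (s + g)))"
proof -
  have e1: "(1 / s - 1 / (s + c)) - (1 / s - 1 / (s + g)) = (c - g) / ((s+g)*(s+c))"
  proof -
    have "(1 / s - 1 / (s + c)) - (1 / s - 1 / (s + g)) = 1/(s+g) - 1/(s+c)" by simp
    also have "\<dots> = ((s+c) - (s+g)) / ((s+g)*(s+c))" using assms by (simp add: diff_frac_eq)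
    finally show ?thesis by simp
  qed
  have e2: "1 / (s + g) ^ 2 - 1 / ((s+g)*(s+c)) = (c - g) / ((s+g)^2*(s+c))"
    using assms aux2[of "s+g" "s+c"] by simp
  have "(1 / (c-g)) * (1 / (s + g) ^ 2) - (1 / (c-g)^2) * ((c - g) / ((s+g)*(s+c)))
     = (1 / (c-g)) * (1 / (s + g) ^ 2 - 1 / ((s+g)*(s+c)))"
    using assms by (intro aux3) simp
  also have "\<dots> = 1 / ((s + g)^2 * (s + c))" unfolding e2 using assms by simp
  finally show ?thesis unfolding e1 by simp
qed

lemma PF_sums:
  fixes g :: real and c :: nat
  assumes good: "\<forall>i::nat. g + real (Suc i) \<noteq> 0" and cg: "real c \<noteq> g"
  shows "(\<lambda>n. 1 / ((real (Suc n) + g)^2 * (real (Suc n) + real c))) sums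
    ((rzeta 2 - shifted_harm_pow 2 g) / (real c - g) - (shifted_harm (real c) - shifted_harm g) / (real c - g)^2)"
proof -
  define D where "D = real c - g"
  have D0: "D \<noteq> 0" using cg by (simp add: D_def)
  have s1: "(\<lambda>n. (1 / D) * (1 / (real (Suc n) + g) ^ 2)) sums ((1/D) * (rzeta 2 - shifted_harm_pow 2 g))"
    by (intro sums_mult tail_sums) auto
  have s2: "(\<lambda>n. (1 / D^2) * ((1 / real (Suc n) - 1 / (real (Suc n) + real c)) - (1 / real (Suc n) - 1 / (real (Suc n) + g))))
     sums ((1 / D^2) * (shifted_harm (real c) - shifted_harm g))"
    by (intro sums_mult sums_diff H_sums)
  have eq: "1 / ((real (Suc n) + g)^2 * (real (Suc n) + real c)) =
     (1 / D) * (1 / (real (Suc n) + g) ^ 2) - (1 / D^2) * ((1 / real (Suc n) - 1 / (real (Suc n) + real c)) - (1 / real (Suc n) - 1 / (real (Suc n) + g)))" for n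
  proof -
    have a: "real (Suc n) + g \<noteq> 0" using good by (simp add: add.commute)
    have b: "real (Suc n) + real c \<noteq> 0" by simp
    have c: "real (Suc n) \<noteq> 0" by simp
    show ?thesis using a b c D0 unfolding D_def by (intro pf_alg) auto
  qed
  have "(\<lambda>n. 1 / ((real (Suc n) + g)^2 * (real (Suc n) + real c))) sums
     ((1/D) * (rzeta 2 - shifted_harm_pow 2 g) - (1 / D^2) * (shifted_harm (real c) - shifted_harm g))"
    unfolding eq by (rule sums_diff[OF s1 s2])
  then show ?thesis by (simp add: D_def)
qed

lemma H2_bound: "y \<ge> 0 \<Longrightarrow> \<bar>shifted_harm_pow 2 y\<bar> \<le> rzeta 2"
proof -
  assume y: "y \<ge> 0"
  have t: "(\<lambda>k. 1 / (real (Suc k) + y) ^ 2) sums (rzeta 2 - shifted_harm_pow 2 y)"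
    by (rule tail_sums) simp
  have "0 \<le> rzeta 2 - shifted_harm_pow 2 y"
    by (rule sums_le[OF _ sums_zero t]) simp
  moreover have "rzeta 2 - shifted_harm_pow 2 y \<le> rzeta 2"
  proof (rule sums_le[OF _ t zeta_sums])
    show "\<And>n. 1 / (real (Suc n) + y) ^ 2 \<le> 1 / real (Suc n) ^ 2"
      using y by (intro divide_left_mono power_mono) auto
  qed simp
  ultimately show ?thesis by linarith
qed

lemma aux4: "(s::real) \<noteq> 0 \<Longrightarrow> s+1 \<noteq> 0 \<Longrightarrow> X/(s*(s+1)) = (X/s - (X+Y)/(s+1)) + Y/(s+1)"
proof -
  assume s: "s \<noteq> 0" "s+1 \<noteq> 0"
  have "X/s - X/(s+1) = (X * (s + 1) - X * s) / (s * (s + 1))" using s by (simp add: diff_frac_eq)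
  then have "X/s - X/(s+1) = X/(s*(s+1))" by (simp add: algebra_simps)
  then show ?thesis by (simp add: add_divide_distrib)
qed

lemma SBP_sums:
  fixes a :: real and c :: nat
  assumes ac: "a > real c"
  shows "(\<lambda>n. shifted_harm_pow 2 (real (Suc n) + a) / ((real (Suc n) + real c) * (real (Suc n) + real c + 1))) sums
    (shifted_harm_pow 2 a / (real c + 1) + ((rzeta 2 - shifted_harm_pow 2 a) / (real c - a) - (shifted_harm (real c) - shifted_harm a) / (real c - a)^2))"
proof -
  define P where "P = (rzeta 2 - shifted_harm_pow 2 a) / (real c - a) - (shifted_harm (real c) - shifted_harm a) / (real c - a)^2"
  define h where "h n = shifted_harm_pow 2 (real (Suc n) + a) / (real (Suc n) + real c)" for n
  define q where "q n = 1 / ((real (Suc n) + a)^2 * (real (Suc n) + real c))" for n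
  have a0: "a > 0" using ac by linarith
  have q: "q sums P" unfolding q_def P_def using ac a0
    by (intro PF_sums) (auto simp: add_pos_pos)
  then have q': "(\<lambda>n. q (Suc n)) sums (P - q 0)" by (simp add: sums_Suc_iff)
  have "h \<longlonglongrightarrow> 0"
  proof (rule Lim_null_comparison)
    show "eventually (\<lambda>n. norm (h n) \<le> rzeta 2 * (1 / real (Suc n))) sequentially"
    proof (rule always_eventually, rule allI)
      fix n
      have "norm (h n) = \<bar>shifted_harm_pow 2 (real (Suc n) + a)\<bar> / (real (Suc n) + real c)"
        unfolding h_def by (simp add: abs_divide)
      also have "\<dots> \<le> rzeta 2 / (real (Suc n) + real c)"
        using a0 by (intro divide_right_mono H2_bound) auto
      also have "\<dots> \<le> rzeta 2 / real (Suc n)"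
      proof (rule divide_left_mono)
        show "0 \<le> rzeta 2" using H2_bound[of 0] by simp
      qed auto
      finally show "norm (h n) \<le> rzeta 2 * (1 / real (Suc n))" by simp
    qed
    show "(\<lambda>n. rzeta 2 * (1 / real (Suc n))) \<longlonglongrightarrow> 0"
      using tendsto_mult[OF tendsto_const LIMSEQ_inverse_real_of_nat, of "rzeta 2"] by (simp add: inverse_eq_divide)
  qed
  then have tel: "(\<lambda>n. h n - h (Suc n)) sums (h 0 - 0)" by (rule telescope_sums')
  have eq: "shifted_harm_pow 2 (real (Suc n) + a) / ((real (Suc n) + real c) * (real (Suc n) + real c + 1)) = (h n - h (Suc n)) + q (Suc n)" for n
  proof -
    have r: "shifted_harm_pow 2 (real (Suc (Suc n)) + a) = shifted_harm_pow 2 (real (Suc n) + a) + 1 / (real (Suc n) + a + 1)^2"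
      using Hp_rec[of 2 "real (Suc n) + a"] by (simp add: ac_simps)
    have "q (Suc n) = (1 / (real (Suc n) + a + 1)^2) / (real (Suc n) + real c + 1)"
      unfolding q_def by (simp add: ac_simps)
    moreover have "h (Suc n) = (shifted_harm_pow 2 (real (Suc n) + a) + 1 / (real (Suc n) + a + 1)^2) / (real (Suc n) + real c + 1)"
      unfolding h_def r by (simp add: ac_simps)
    moreover have "h n = shifted_harm_pow 2 (real (Suc n) + a) / (real (Suc n) + real c)"
      unfolding h_def by simp
    ultimately show ?thesis
      by (simp only:) (rule aux4, simp_all add: add_pos_pos del: of_nat_Suc)
  qed
  have "(\<lambda>n. shifted_harm_pow 2 (real (Suc n) + a) / ((real (Suc n) + real c) * (real (Suc n) + real c + 1))) sums ((h 0 - 0) + (P - q 0))"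
    unfolding eq by (rule sums_add[OF tel q'])
  moreover have "(h 0 - 0) + (P - q 0) = shifted_harm_pow 2 a / (real c + 1) + P"
  proof -
    have r: "shifted_harm_pow 2 (1 + a) = shifted_harm_pow 2 a + 1 / (a + 1)^2"
      using Hp_rec[of 2 a] by (simp add: ac_simps)
    show ?thesis unfolding h_def q_def using r by (simp add: add_divide_distrib ac_simps)
  qed
  ultimately have "(\<lambda>n. shifted_harm_pow 2 (real (Suc n) + a) / ((real (Suc n) + real c) * (real (Suc n) + real c + 1))) sums (shifted_harm_pow 2 a / (real c + 1) + P)"
    by (simp only:)
  then show ?thesis by (simp only: P_def)
qed

lemma H_iter: "shifted_harm (x + real n) = shifted_harm x + (\<Sum>j=1..n. 1 / (x + real j))"
proof (induction n)
  case 0 then show ?case by simp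
next
  case (Suc n)
  have "shifted_harm (x + real (Suc n)) = shifted_harm ((x + real n) + 1)" by (simp add: ac_simps)
  also have "\<dots> = shifted_harm (x + real n) + 1 / (x + real n + 1)" by (rule H_rec)
  finally show ?case using Suc by (simp add: ac_simps)
qed

lemma aux6: "(n::real) > 0 \<Longrightarrow> (A/n - S) + (A+B)*(1/(n+1) - 1/n) = (A+B)/(n+1) - (S + B/n)"
  by (simp add: algebra_simps add_divide_distrib)

lemma key_i:
  "shifted_harm_pow 2 y + (\<Sum>j=1..c. shifted_harm_pow 2 (y + real j) * (1 / real (Suc j) - 1 / real j))
   = shifted_harm_pow 2 (y + real c) / (real c + 1) - (\<Sum>u=1..c. 1 / ((y + real u)^2 * real u))"
proof (induction c)
  case 0 then show ?case by simp
next
  case (Suc c)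
  define A where "A = shifted_harm_pow 2 (y + real c)"
  define B where "B = 1 / (y + real c + 1)^2"
  define n where "n = real c + 1"
  have n0: "n > 0" by (simp add: n_def)
  have r: "shifted_harm_pow 2 (y + real (Suc c)) = A + B"
    using Hp_rec[of 2 "y + real c"] by (simp add: A_def B_def ac_simps)
  have t: "1 / ((y + real (Suc c))^2 * real (Suc c)) = B / n" by (simp add: B_def n_def ac_simps)
  have "shifted_harm_pow 2 y + (\<Sum>j=1..Suc c. shifted_harm_pow 2 (y + real j) * (1 / real (Suc j) - 1 / real j))
     = (A / n - (\<Sum>u=1..c. 1 / ((y + real u)^2 * real u))) + (A + B) * (1 / (n+1) - 1 / n)"
    using Suc r by (simp add: A_def n_def ac_simps)
  also have "\<dots> = (A + B) / (n + 1) - ((\<Sum>u=1..c. 1 / ((y + real u)^2 * real u)) + B / n)"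
    using n0 by (rule aux6)
  finally show ?case using r t by (simp add: n_def ac_simps)
qed

lemma final_alg:
  fixes y :: real
  assumes y: "y \<noteq> 0"
    and e1: "A0 - A1 = K" and e2: "H2y + K = H2a / n - U"
    and e3: "U = Hc / y^2 - (H2a - H2y) / y - (Ha - Hy) / y^2"
    and e4: "H3y = H3m + 1 / y^3" and e5: "Hy = Hm + 1 / y" and e6: "H2y = H2m + 1 / y^2"
  shows "A0 + 2*H3y + 2*Hy*H2y - Hy*Z - (H2y*(1/y - 1) + A1 + 2*H3m + 2*Hm*H2m - Hm*Z) - Hy/y^2
     = H2a / n + ((Z - H2a)/(-y) - (Hc - Ha)/(-y)^2)"
proof -
  have m: "H3m = H3y - 1/y^3" "Hm = Hy - 1/y" "H2m = H2y - 1/y^2" "A0 = A1 + K" "K = H2a/n - U - H2y"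
    using e4 e5 e6 e1 e2 by auto
  show ?thesis unfolding m e3 using y by (simp add: field_simps power2_eq_square power3_eq_cube)
qed

lemma aux7: "(j::real) > 0 \<Longrightarrow> y > 0 \<Longrightarrow> (-y) * (X / (j * (y + j))) = X * (1 / (y + j) - 1 / j)"
  by (simp add: field_simps)

lemma S1:
  assumes "a - real c > 0"
  shows "(real c - a) * (\<Sum>j=1..c. shifted_harm_pow 2 (a + real j - real c) / (real j * (a + real j - real c)))
    = (\<Sum>j=1..c. shifted_harm_pow 2 ((a - real c) + real j) * (1 / ((a - real c) + real j) - 1 / real j))"
  unfolding sum_distrib_left
proof (rule sum.cong)
  fix j assume j: "j \<in> {1..c}"
  have "(real c - a) * (shifted_harm_pow 2 (a + real j - real c) / (real j * (a + real j - real c)))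
     = (- (a - real c)) * (shifted_harm_pow 2 ((a - real c) + real j) / (real j * ((a - real c) + real j)))"
    by (simp add: algebra_simps)
  also have "\<dots> = shifted_harm_pow 2 ((a - real c) + real j) * (1 / ((a - real c) + real j) - 1 / real j)"
    using j assms by (intro aux7) auto
  finally show "(real c - a) * (shifted_harm_pow 2 (a + real j - real c) / (real j * (a + real j - real c)))
     = shifted_harm_pow 2 ((a - real c) + real j) * (1 / ((a - real c) + real j) - 1 / real j)" .
qed simp

lemma S3:
  "(\<Sum>j=1..Suc c. shifted_harm_pow 2 ((y - 1) + real j) * (1 / ((y - 1) + real j) - 1 / real j))
   = shifted_harm_pow 2 y * (1 / y - 1) + (\<Sum>j=1..c. shifted_harm_pow 2 (y + real j) * (1 / (y + real j) - 1 / real (Suc j)))"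
proof (induction c)
  case 0 then show ?case by simp
next
  case (Suc c)
  have e: "y - 1 + real (Suc (Suc c)) = y + real (Suc c)" by simp
  have "(\<Sum>j=1..Suc (Suc c). shifted_harm_pow 2 ((y - 1) + real j) * (1 / ((y - 1) + real j) - 1 / real j))
    = (\<Sum>j=1..Suc c. shifted_harm_pow 2 ((y - 1) + real j) * (1 / ((y - 1) + real j) - 1 / real j))
      + shifted_harm_pow 2 ((y - 1) + real (Suc (Suc c))) * (1 / ((y - 1) + real (Suc (Suc c))) - 1 / real (Suc (Suc c)))"
    by (rule sum.cl_ivl_Suc[THEN trans]) simp
  also have "\<dots> = shifted_harm_pow 2 y * (1 / y - 1) + ((\<Sum>j=1..c. shifted_harm_pow 2 (y + real j) * (1 / (y + real j) - 1 / real (Suc j)))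
      + shifted_harm_pow 2 (y + real (Suc c)) * (1 / (y + real (Suc c)) - 1 / real (Suc (Suc c))))"
    unfolding Suc e by simp
  also have "(\<Sum>j=1..c. shifted_harm_pow 2 (y + real j) * (1 / (y + real j) - 1 / real (Suc j)))
      + shifted_harm_pow 2 (y + real (Suc c)) * (1 / (y + real (Suc c)) - 1 / real (Suc (Suc c)))
     = (\<Sum>j=1..Suc c. shifted_harm_pow 2 (y + real j) * (1 / (y + real j) - 1 / real (Suc j)))"
    by simp
  finally show ?case .
qed

lemma aux8: "(u::real) > 0 \<Longrightarrow> y > 0 \<Longrightarrow> 1 / ((y + u)^2 * u) = (1 / u) / y^2 - (1 / (y + u)^2) / y - (1 / (y + u)) / y^2"
proof -
  assume u: "u > 0" and y: "y > 0"
  define w where "w = y + u"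
  have w: "w \<noteq> 0" "u = w - y" using u y by (auto simp: w_def)
  show ?thesis unfolding w_def[symmetric] using w(1) u y by (simp add: w(2) field_simps power2_eq_square)
qed
lemma U_id:
  assumes y: "y > 0"
  shows "(\<Sum>u=1..c. 1 / ((y + real u)^2 * real u)) =
    shifted_harm (real c) / y^2 - (shifted_harm_pow 2 (y + real c) - shifted_harm_pow 2 y) / y
      - (shifted_harm (y + real c) - shifted_harm y) / y^2"
proof -
  have "(\<Sum>u=1..c. 1 / ((y + real u)^2 * real u)) =
     (\<Sum>u=1..c. (1 / real u) / y^2 - (1 / (y + real u)^2) / y - (1 / (y + real u)) / y^2)"
    using y by (intro sum.cong refl aux8) auto
  also have "\<dots> = (\<Sum>u=1..c. 1 / real u) / y^2 - (\<Sum>u=1..c. 1 / (y + real u)^2) / y - (\<Sum>u=1..c. 1 / (y + real u)) / y^2"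
    by (simp add: sum_subtractf sum_divide_distrib)
  finally show ?thesis using H_nat[of c] Hp_iter[of 2 y c] H_iter[of y c] by simp
qed

definition Fc :: "real \<Rightarrow> nat \<Rightarrow> real" where
  "Fc a c = (real c - a) * (\<Sum>j=1..c. shifted_harm_pow 2 (a + real j - real c) / (real j * (a + real j - real c)))
     + 2 * shifted_harm_pow 3 (a - real c) + 2 * shifted_harm (a - real c) * shifted_harm_pow 2 (a - real c)
     - shifted_harm (a - real c) * rzeta 2"

lemma L6:
  assumes ac: "a > real c + 1"
  shows "Fc a c - Fc a (Suc c) - shifted_harm (a - real c) / (a - real c)^2
    = shifted_harm_pow 2 a / (real c + 1) + ((rzeta 2 - shifted_harm_pow 2 a) / (real c - a)
       - (shifted_harm (real c) - shifted_harm a) / (real c - a)^2)"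
proof -
  define y where "y = a - real c"
  have y1: "y > 1" using ac by (simp add: y_def)
  have ya: "y + real c = a" by (simp add: y_def)
  have ca: "real c - a = - y" by (simp add: y_def)
  have ysc: "a - real (Suc c) = y - 1" by (simp add: y_def)
  define A0 where "A0 = (\<Sum>j=1..c. shifted_harm_pow 2 (y + real j) * (1 / (y + real j) - 1 / real j))"
  define A1 where "A1 = (\<Sum>j=1..c. shifted_harm_pow 2 (y + real j) * (1 / (y + real j) - 1 / real (Suc j)))"
  define K where "K = (\<Sum>j=1..c. shifted_harm_pow 2 (y + real j) * (1 / real (Suc j) - 1 / real j))"
  define U where "U = (\<Sum>u=1..c. 1 / ((y + real u)^2 * real u))"
  have e1: "A0 - A1 = K" unfolding A0_def A1_def K_def
    by (simp add: sum_subtractf[symmetric] algebra_simps)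
  have e2: "shifted_harm_pow 2 y + K = shifted_harm_pow 2 a / (real c + 1) - U"
    unfolding K_def U_def using key_i[of y c] ya by simp
  have e3: "U = shifted_harm (real c) / y^2 - (shifted_harm_pow 2 a - shifted_harm_pow 2 y) / y - (shifted_harm a - shifted_harm y) / y^2"
    unfolding U_def using U_id[of y c] y1 ya by simp
  have e4: "shifted_harm_pow 3 y = shifted_harm_pow 3 (y - 1) + 1 / y^3"
    using Hp_rec[of 3 "y - 1"] by simp
  have e5: "shifted_harm y = shifted_harm (y - 1) + 1 / y"
    using H_rec[of "y - 1"] by simp
  have e6: "shifted_harm_pow 2 y = shifted_harm_pow 2 (y - 1) + 1 / y^2"
    using Hp_rec[of 2 "y - 1"] by simp
  have F0: "Fc a c = A0 + 2 * shifted_harm_pow 3 y + 2 * shifted_harm y * shifted_harm_pow 2 y - shifted_harm y * rzeta 2"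
    unfolding Fc_def A0_def using S1[of a c] y1 by (simp add: y_def)
  have F1: "Fc a (Suc c) = (shifted_harm_pow 2 y * (1 / y - 1) + A1) + 2 * shifted_harm_pow 3 (y - 1)
     + 2 * shifted_harm (y - 1) * shifted_harm_pow 2 (y - 1) - shifted_harm (y - 1) * rzeta 2"
  proof -
    have "(real (Suc c) - a) * (\<Sum>j=1..Suc c. shifted_harm_pow 2 (a + real j - real (Suc c)) / (real j * (a + real j - real (Suc c))))
      = (\<Sum>j=1..Suc c. shifted_harm_pow 2 ((y - 1) + real j) * (1 / ((y - 1) + real j) - 1 / real j))"
    proof -
      have p: "a - real (Suc c) > 0" using ysc y1 by simp
      show ?thesis using S1[OF p] by (simp only: ysc)
    qed
    also have "\<dots> = shifted_harm_pow 2 y * (1 / y - 1) + A1" unfolding A1_def by (rule S3)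
    finally show ?thesis unfolding Fc_def ysc by simp
  qed
  show ?thesis unfolding F0 F1 ca y_def[symmetric]
    by (rule final_alg[OF _ e1 e2 e3 e4 e5 e6]) (use y1 in simp)
qed

lemma tel_down: "(m::nat) \<le> n \<Longrightarrow> (\<Sum>i=m..<n. f i - f (Suc i)) = f m - (f n :: real)"
  using sum_Suc_diff'[of m n f] by (simp add: sum_subtractf)

lemma tel_frac:
  fixes s :: real and r k :: nat
  assumes s: "s > 0" and rk: "r < k"
  shows "1 / ((s + real r) * (s + real k)) = (1 / (real k - real r)) * (\<Sum>c=r..<k. 1 / ((s + real c) * (s + real c + 1)))"
proof -
  have "(\<Sum>c=r..<k. 1 / ((s + real c) * (s + real c + 1))) = (\<Sum>c=r..<k. 1 / (s + real c) - 1 / (s + real (Suc c)))"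
  proof (rule sum.cong[OF refl])
    fix c assume "c \<in> {r..<k}"
    have p: "s + real c > 0" using s by simp
    have "1 / (s + real c) - 1 / (s + real c + 1) = ((s + real c + 1) - (s + real c)) / ((s + real c) * (s + real c + 1))"
      using p by (subst diff_frac_eq) auto
    then show "1 / ((s + real c) * (s + real c + 1)) = 1 / (s + real c) - 1 / (s + real (Suc c))"
      by (simp add: ac_simps)
  qed
  also have "\<dots> = 1 / (s + real r) - 1 / (s + real k)"
    using rk by (intro tel_down[of r k "\<lambda>c. 1 / (s + real c)"]) simp
  also have "\<dots> = ((s + real k) - (s + real r)) / ((s + real r) * (s + real k))"
    using s by (subst diff_frac_eq) auto
  finally have e: "(\<Sum>c=r..<k. 1 / ((s + real c) * (s + real c + 1))) = (real k - real r) / ((s + real r) * (s + real k))"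
    by simp
  have "real k - real r \<noteq> 0" using rk by simp
  then show ?thesis unfolding e by simp
qed

lemma pf2:
  fixes s :: real and r k :: nat
  assumes s: "s > 0" and rk: "r < k"
  shows "1 / ((s + real r) * (s + real k)) = (1 / (real k - real r)) * (1 / (s + real r) - 1 / (s + real k))"
proof -
  have "1 / (s + real r) - 1 / (s + real k) = ((s + real k) - (s + real r)) / ((s + real r) * (s + real k))"
    using s by (subst diff_frac_eq) auto
  moreover have "real k - real r \<noteq> 0" using rk by simp
  ultimately show ?thesis by simp
qed

theorem corollary2p5:
  fixes r k m :: nat and \<alpha> :: real
  assumes "r > 0" and "k > 0" and "m > 0"
    and "\<alpha> > real k" and "k > r"
    and "\<forall>i::nat. i \<ge> 1 \<longrightarrow> \<alpha> - real m \<noteq> - real i"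
    and "\<forall>j\<in>{1..m}. \<alpha> \<noteq> real m + real r - real j \<and> \<alpha> \<noteq> real m + real k - real j"
  shows "(\<lambda>n. shifted_harm_pow 2 (real (Suc n) + \<alpha> - real m)
              / ((real (Suc n) + real r) * (real (Suc n) + real k)))
    sums
     (1 / (real k - real r) *
       ( (real r - \<alpha>) * (\<Sum>j=1..r. shifted_harm_pow 2 (\<alpha> + real j - real r) / (real j * (\<alpha> + real j - real r)))
       - (real k - \<alpha>) * (\<Sum>j=1..k. shifted_harm_pow 2 (\<alpha> + real j - real k) / (real j * (\<alpha> + real j - real k)))
       - (\<Sum>j=1..k-r. shifted_harm (\<alpha> + real j - real k) / (\<alpha> + real j - real k)^2)
       + 2 * shifted_harm_pow 3 (\<alpha> - real r)
       + shifted_harm (\<alpha> - real k) * rzeta 2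
       + 2 * shifted_harm (\<alpha> - real r) * shifted_harm_pow 2 (\<alpha> - real r)
       - 2 * shifted_harm_pow 3 (\<alpha> - real k)
       - shifted_harm (\<alpha> - real r) * rzeta 2
       - 2 * shifted_harm (\<alpha> - real k) * shifted_harm_pow 2 (\<alpha> - real k))
     - 1 / (real k - real r) *
       ( (\<Sum>j=1..m. (shifted_harm (\<alpha> + real j - real m) - shifted_harm (real r)) / (\<alpha> + real j - real m - real r)^2)
       - (\<Sum>j=1..m. (rzeta 2 - shifted_harm_pow 2 (\<alpha> + real j - real m)) / (\<alpha> + real j - real m - real r))
       - (\<Sum>j=1..m. (shifted_harm (\<alpha> + real j - real m) - shifted_harm (real k)) / (\<alpha> + real j - real m - real k)^2)
       + (\<Sum>j=1..m. (rzeta 2 - shifted_harm_pow 2 (\<alpha> + real j - real m)) / (\<alpha> + real j - real m - real k))))"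
proof -
  note rk = \<open>k > r\<close>
  note ak = \<open>\<alpha> > real k\<close>
  note a6 = assms(6)
  note a7 = assms(7)
  define d where "d = real k - real r"
  define G where "G j = \<alpha> + real j - real m" for j :: nat
  define PFv where "PFv g c = (rzeta 2 - shifted_harm_pow 2 g) / (real c - g) - (shifted_harm (real c) - shifted_harm g) / (real c - g)^2" for g :: real and c :: nat
  define Tc where "Tc c n = shifted_harm_pow 2 (real (Suc n) + \<alpha>) / ((real (Suc n) + real c) * (real (Suc n) + real c + 1))" for c n :: nat
  define Q where "Q j c n = 1 / ((real (Suc n) + G j)^2 * (real (Suc n) + real c))" for j c n :: nat
  have goodG: "\<forall>i::nat. G j + real (Suc i) \<noteq> 0" if "j \<in> {1..m}" for j
  proof
    fix i
    have "\<alpha> - real m \<noteq> - real (j + Suc i)" using a6 by (intro a6[rule_format]) simp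
    then show "G j + real (Suc i) \<noteq> 0" unfolding G_def by (auto simp: algebra_simps)
  qed
  have Gr: "real r \<noteq> G j" and Gk: "real k \<noteq> G j" if "j \<in> {1..m}" for j
    using a7 that unfolding G_def by (auto simp: algebra_simps)
  have sT: "Tc c sums (shifted_harm_pow 2 \<alpha> / (real c + 1) + PFv \<alpha> c)" if "c \<in> {r..<k}" for c
    unfolding Tc_def PFv_def using that ak by (intro SBP_sums) auto
  have sQ: "Q j c sums PFv (G j) c" if "j \<in> {1..m}" "real c \<noteq> G j" for j c
    unfolding Q_def PFv_def using that goodG by (intro PF_sums) auto
  have S: "(\<lambda>n. (1 / d) * ((\<Sum>c=r..<k. Tc c n) - (\<Sum>j=1..m. Q j r n - Q j k n))) sums
      ((1 / d) * ((\<Sum>c=r..<k. shifted_harm_pow 2 \<alpha> / (real c + 1) + PFv \<alpha> c) - (\<Sum>j=1..m. PFv (G j) r - PFv (G j) k)))"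
    by (intro sums_mult sums_diff sums_sum sT sQ Gr Gk) auto
  have fun_eq: "shifted_harm_pow 2 (real (Suc n) + \<alpha> - real m) / ((real (Suc n) + real r) * (real (Suc n) + real k))
      = (1 / d) * ((\<Sum>c=r..<k. Tc c n) - (\<Sum>j=1..m. Q j r n - Q j k n))" for n
  proof -
    define s where "s = real (Suc n)"
    have s0: "s > 0" by (simp add: s_def)
    have it: "shifted_harm_pow 2 (s + \<alpha>) = shifted_harm_pow 2 (s + \<alpha> - real m) + (\<Sum>j=1..m. 1 / (s + G j)^2)"
      using Hp_iter[of 2 "s + \<alpha> - real m" m] by (simp add: G_def algebra_simps)
    have e1: "shifted_harm_pow 2 (s + \<alpha>) / ((s + real r) * (s + real k)) = (1 / d) * (\<Sum>c=r..<k. Tc c n)"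
    proof -
      have "shifted_harm_pow 2 (s + \<alpha>) / ((s + real r) * (s + real k)) = shifted_harm_pow 2 (s + \<alpha>) * (1 / ((s + real r) * (s + real k)))"
        by simp
      also have "\<dots> = (1 / d) * (\<Sum>c=r..<k. shifted_harm_pow 2 (s + \<alpha>) * (1 / ((s + real c) * (s + real c + 1))))"
        unfolding tel_frac[OF s0 rk] d_def by (simp add: sum_distrib_left)
      finally show ?thesis by (simp add: Tc_def s_def)
    qed
    have e2: "(\<Sum>j=1..m. 1 / (s + G j)^2) / ((s + real r) * (s + real k)) = (1 / d) * (\<Sum>j=1..m. Q j r n - Q j k n)"
    proof -
      have "(\<Sum>j=1..m. 1 / (s + G j)^2) / ((s + real r) * (s + real k)) = (\<Sum>j=1..m. 1 / (s + G j)^2 * (1 / ((s + real r) * (s + real k))))"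
        by (simp add: sum_divide_distrib)
      also have "\<dots> = (\<Sum>j=1..m. (1 / d) * (Q j r n - Q j k n))"
        unfolding pf2[OF s0 rk] d_def Q_def s_def[symmetric] by (intro sum.cong refl) (simp add: algebra_simps)
      finally show ?thesis by (simp add: sum_distrib_left)
    qed
    have "shifted_harm_pow 2 (s + \<alpha> - real m) / ((s + real r) * (s + real k))
       = shifted_harm_pow 2 (s + \<alpha>) / ((s + real r) * (s + real k)) - (\<Sum>j=1..m. 1 / (s + G j)^2) / ((s + real r) * (s + real k))"
      unfolding it by (simp add: add_divide_distrib)
    also have "\<dots> = (1 / d) * ((\<Sum>c=r..<k. Tc c n) - (\<Sum>j=1..m. Q j r n - Q j k n))"
      unfolding e1 e2 by (simp add: algebra_simps)
    finally show ?thesis by (simp add: s_def)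
  qed
  have v1: "(\<Sum>c=r..<k. shifted_harm_pow 2 \<alpha> / (real c + 1) + PFv \<alpha> c)
      = Fc \<alpha> r - Fc \<alpha> k - (\<Sum>c=r..<k. shifted_harm (\<alpha> - real c) / (\<alpha> - real c)^2)"
  proof -
    have "(\<Sum>c=r..<k. shifted_harm_pow 2 \<alpha> / (real c + 1) + PFv \<alpha> c)
       = (\<Sum>c=r..<k. (Fc \<alpha> c - Fc \<alpha> (Suc c)) - shifted_harm (\<alpha> - real c) / (\<alpha> - real c)^2)"
    proof (rule sum.cong[OF refl])
      fix c assume "c \<in> {r..<k}"
      then have "\<alpha> > real c + 1" using ak by auto
      then show "shifted_harm_pow 2 \<alpha> / (real c + 1) + PFv \<alpha> c = (Fc \<alpha> c - Fc \<alpha> (Suc c)) - shifted_harm (\<alpha> - real c) / (\<alpha> - real c)^2"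
        unfolding PFv_def using L6 by simp
    qed
    also have "\<dots> = Fc \<alpha> r - Fc \<alpha> k - (\<Sum>c=r..<k. shifted_harm (\<alpha> - real c) / (\<alpha> - real c)^2)"
      using rk tel_down[of r k "Fc \<alpha>"] by (simp add: sum_subtractf)
    finally show ?thesis .
  qed
  have v2: "(\<Sum>j=1..k-r. shifted_harm (\<alpha> + real j - real k) / (\<alpha> + real j - real k)^2)
      = (\<Sum>c=r..<k. shifted_harm (\<alpha> - real c) / (\<alpha> - real c)^2)"
    using rk by (intro sum.reindex_bij_witness[of _ "\<lambda>j. k - j" "\<lambda>c. k - c"]) (auto simp: of_nat_diff algebra_simps)
  have v3: "(\<Sum>j=1..m. PFv (G j) r - PFv (G j) k) =
       (\<Sum>j=1..m. (shifted_harm (\<alpha> + real j - real m) - shifted_harm (real r)) / (\<alpha> + real j - real m - real r)^2)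
       - (\<Sum>j=1..m. (rzeta 2 - shifted_harm_pow 2 (\<alpha> + real j - real m)) / (\<alpha> + real j - real m - real r))
       - (\<Sum>j=1..m. (shifted_harm (\<alpha> + real j - real m) - shifted_harm (real k)) / (\<alpha> + real j - real m - real k)^2)
       + (\<Sum>j=1..m. (rzeta 2 - shifted_harm_pow 2 (\<alpha> + real j - real m)) / (\<alpha> + real j - real m - real k))"
  proof -
    have "PFv (G j) c = (shifted_harm (\<alpha> + real j - real m) - shifted_harm (real c)) / (\<alpha> + real j - real m - real c)^2
        - (rzeta 2 - shifted_harm_pow 2 (\<alpha> + real j - real m)) / (\<alpha> + real j - real m - real c)" for j c
    proof -
      have a: "real c - G j = - (G j - real c)" by simp
      have b: "(real c - G j)^2 = (G j - real c)^2" by (simp add: power2_commute)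
      have dd: "x / (real c - G j) = - (x / (G j - real c))" for x
        by (metis minus_diff_eq minus_divide_right)
      show ?thesis unfolding PFv_def b dd unfolding G_def by (simp add: diff_divide_distrib)
    qed
    note pfv = this
    show ?thesis unfolding pfv sum_subtractf by linarith
  qed
  have v4: "( (real r - \<alpha>) * (\<Sum>j=1..r. shifted_harm_pow 2 (\<alpha> + real j - real r) / (real j * (\<alpha> + real j - real r)))
       - (real k - \<alpha>) * (\<Sum>j=1..k. shifted_harm_pow 2 (\<alpha> + real j - real k) / (real j * (\<alpha> + real j - real k)))
       - (\<Sum>j=1..k-r. shifted_harm (\<alpha> + real j - real k) / (\<alpha> + real j - real k)^2)
       + 2 * shifted_harm_pow 3 (\<alpha> - real r)
       + shifted_harm (\<alpha> - real k) * rzeta 2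
       + 2 * shifted_harm (\<alpha> - real r) * shifted_harm_pow 2 (\<alpha> - real r)
       - 2 * shifted_harm_pow 3 (\<alpha> - real k)
       - shifted_harm (\<alpha> - real r) * rzeta 2
       - 2 * shifted_harm (\<alpha> - real k) * shifted_harm_pow 2 (\<alpha> - real k))
    = Fc \<alpha> r - Fc \<alpha> k - (\<Sum>c=r..<k. shifted_harm (\<alpha> - real c) / (\<alpha> - real c)^2)"
    unfolding Fc_def v2[symmetric] by (simp add: algebra_simps)
  have eqf: "(\<lambda>n. shifted_harm_pow 2 (real (Suc n) + \<alpha> - real m) / ((real (Suc n) + real r) * (real (Suc n) + real k)))
     = (\<lambda>n. (1 / d) * ((\<Sum>c=r..<k. Tc c n) - (\<Sum>j=1..m. Q j r n - Q j k n)))"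
    by (rule ext) (rule fun_eq)
  show ?thesis unfolding eqf v4
    using S unfolding v1 v3 d_def
    by (simp add: right_diff_distrib)
qed

end
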